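(* There exists $(X_1,\dots,X_5)\in M'_5$, with $X_j=\begin{bmatrix}A_j\\ B_j\end{bmatrix}$ where $A_j,B_j\in\mathbb M^{2\times 2}$, and there exist real constants $c_1,\dots,c_5$ and $d_1,\dots,d_5$ such that \[ c_i-c_j+d_i\det(A_i-A_j)+\langle A_i-A_j,\,B_iJ\rangle<0\qquad\text{for all } i\neq j,\ i,j\in\{1,\dots,5\}. \]
   Context: $\mathbb M^{m\times n}$ is the space of real $m\times n$ matrices; $\langle\cdot,\cdot\rangle$ is the Frobenius inner product on $\mathbb M^{2\times 2}$, and $J=\begin{pmatrix}0&-1\\1&0\end{pmatrix}$. For $N\ge 3$, an $N$-tuple $(X_1,\dots,X_N)$ in $\mathbb M^{4\times 2}$ is a $T_N$-configuration if there exist $P\in\mathbb M^{4\times 2}$, rank-one matrices $C_1,\dots,C_N\in\mathbb M^{4\times 2}$ with $\sum_{j=1}^N C_j=0$, and numbers $\kappa_1,\dots,\kappa_N>1$ such that $X_j=P+C_1+\dots+C_{j-1}+\kappa_jC_j$ for $j=1,\dots,N$. $M'_N$ denotes the set of $T_N$-configurations in $\mathbb M^{4\times 2}$ whose rank-one matrices have the form $C_j=\begin{pmatrix}p_j\\ (\alpha_j\cdot\delta)q_j\end{pmatrix}\otimes\alpha_j$ (here $\begin{pmatrix}p_j\\ (\alpha_j\cdot\delta)q_j\end{pmatrix}\in\mathbb R^4$), where $p_j,q_j,\alpha_j,\delta\in\mathbb R^2$, $\alpha_j\ne 0$, at least three of the $\alpha_j$ are mutually non-collinear, and $\sum_{j=1}^N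 p_j\otimes\alpha_j=0$, $\sum_{j=1}^N q_j\otimes\alpha_j\otimes\alpha_j=0$. For $X\in\mathbb M^{4\times 2}$ we write $X=\begin{bmatrix}A\\ B\end{bmatrix}$ with $A$ the first two rows and $B$ the last two rows. *)

theory Defs
  imports "HOL-Analysis.Analysis"
begin

text \<open>Real m x n matrices are rendered as \<open>real^'n^'m\<close> (m rows, n columns).
  N-tuples are functions on the index set {1..N}.\<close>

definition outer :: "real^'m \<Rightarrow> real^'n \<Rightarrow> real^'n^'m" where
  "outer u v = (\<chi> i k. u $ i * v $ k)"

definition T_config :: "nat \<Rightarrow> (nat \<Rightarrow> real^2^4) \<Rightarrow> bool" where
  "T_config N X \<longleftrightarrow> N \<ge> 3 \<and>
     (\<exists>(P::real^2^4) (C::nat \<Rightarrow> real^2^4) (\<kappa>::nat \<Rightarrow> real).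
        (\<forall>j\<in>{1..N}. rank (C j) = 1 \<and> \<kappa> j > 1) \<and>
        (\<Sum>j=1..N. C j) = 0 \<and>
        (\<forall>j\<in>{1..N}. X j = P + (\<Sum>i=1..<j. C i) + \<kappa> j *\<^sub>R C j))"

definition stack :: "real^2 \<Rightarrow> real^2 \<Rightarrow> real^4" where
  "stack p q = (\<chi> i. if i = 1 then p $ 1 else if i = 2 then p $ 2
                      else if i = 3 then q $ 1 else q $ 2)"

definition collinear_vec :: "real^2 \<Rightarrow> real^2 \<Rightarrow> bool" where
  "collinear_vec a b \<longleftrightarrow> (\<exists>c::real. a = c *\<^sub>R b \<or> b = c *\<^sub>R a)"

definition M'_config :: "nat \<Rightarrow> (nat \<Rightarrow> real^2^4) \<Rightarrow> bool" where
  "M'_config N X \<longleftrightarrow> N \<ge> 3 \<and>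
     (\<exists>(P::real^2^4) (C::nat \<Rightarrow> real^2^4) (\<kappa>::nat \<Rightarrow> real)
        (p::nat \<Rightarrow> real^2) (q::nat \<Rightarrow> real^2) (\<alpha>::nat \<Rightarrow> real^2) (\<delta>::real^2).
        (\<forall>j\<in>{1..N}. rank (C j) = 1 \<and> \<kappa> j > 1) \<and>
        (\<Sum>j=1..N. C j) = 0 \<and>
        (\<forall>j\<in>{1..N}. X j = P + (\<Sum>i=1..<j. C i) + \<kappa> j *\<^sub>R C j) \<and>
        (\<forall>j\<in>{1..N}. C j = outer (stack (p j) ((\<alpha> j \<bullet> \<delta>) *\<^sub>R q j)) (\<alpha> j)) \<and>
        (\<forall>j\<in>{1..N}. \<alpha> j \<noteq> 0) \<and>
        (\<exists>j1\<in>{1..N}. \<exists>j2\<in>{1..N}. \<exists>j3\<in>{1..N}.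
            \<not> collinear_vec (\<alpha> j1) (\<alpha> j2) \<and> \<not> collinear_vec (\<alpha> j1) (\<alpha> j3) \<and>
            \<not> collinear_vec (\<alpha> j2) (\<alpha> j3)) \<and>
        (\<Sum>j=1..N. outer (p j) (\<alpha> j)) = 0 \<and>
        (\<forall>a b c::2. (\<Sum>j=1..N. q j $ a * \<alpha> j $ b * \<alpha> j $ c) = 0))"

definition upper :: "real^2^4 \<Rightarrow> real^2^2" where
  "upper X = (\<chi> i k. X $ (if i = 1 then 1 else 2) $ k)"

definition lower :: "real^2^4 \<Rightarrow> real^2^2" where
  "lower X = (\<chi> i k. X $ (if i = 1 then 3 else 4) $ k)"

definition Jmat :: "real^2^2" where
  "Jmat = (\<chi> i k. if i = 1 \<and> k = 2 then -1 else if i = 2 \<and> k = 1 then 1 else 0)"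

definition frob :: "real^2^2 \<Rightarrow> real^2^2 \<Rightarrow> real" where
  "frob A B = (\<Sum>i\<in>UNIV. \<Sum>k\<in>UNIV. A $ i $ k * B $ i $ k)"

end

theory Submission
  imports Defs
begin


definition V2 :: "real \<Rightarrow> real \<Rightarrow> real^2" where
  "V2 a b = (\<chi> i. if i = 1 then a else b)"
definition M22 :: "real \<Rightarrow> real \<Rightarrow> real \<Rightarrow> real \<Rightarrow> real^2^2" where
  "M22 a b c d = (\<chi> i k. if i = 1 then (if k = 1 then a else b) else (if k = 1 then c else d))"
definition M42 :: "real \<Rightarrow> real \<Rightarrow> real \<Rightarrow> real \<Rightarrow> real \<Rightarrow> real \<Rightarrow> real \<Rightarrow> real \<Rightarrow> real^2^4" where
  "M42 a b c d e f g h = (\<chi> i k. if i = 1 then (if k = 1 then a else b) else if i = 2 then (if k = 1 then c else d)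
      else if i = 3 then (if k = 1 then e else f) else (if k = 1 then g else h))"

lemma ne4: "(1::4) \<noteq> 2" "(1::4) \<noteq> 3" "(1::4) \<noteq> 4" "(2::4) \<noteq> 3" "(2::4) \<noteq> 4" "(3::4) \<noteq> 4"
  "(2::4) \<noteq> 1" "(3::4) \<noteq> 1" "(4::4) \<noteq> 1" "(3::4) \<noteq> 2" "(4::4) \<noteq> 2" "(4::4) \<noteq> 3"
  by simp_all
lemma ne2: "(1::2) \<noteq> 2" "(2::2) \<noteq> 1" by simp_all

lemma V2_nth[simp]: "V2 a b $ 1 = a" "V2 a b $ 2 = b" by (simp_all add: V2_def)

lemma V2_inner[simp]: "V2 a b \<bullet> V2 c d = a * c + b * d"
  by (simp add: inner_vec_def sum_2)
lemma V2_scale[simp]: "r *\<^sub>R V2 a b = V2 (r * a) (r * b)"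
  by (simp add: vec_eq_iff forall_2)
lemma V2_eq[simp]: "V2 a b = V2 c d \<longleftrightarrow> a = c \<and> b = d"
  by (auto simp: vec_eq_iff forall_2)
lemma V2_zero: "(0::real^2) = V2 0 0" by (simp add: vec_eq_iff forall_2)

lemma outer_V2: "outer (V2 a b) (V2 c d) = M22 (a*c) (a*d) (b*c) (b*d)"
  by (simp add: outer_def M22_def vec_eq_iff forall_2)
lemma outer_stack: "outer (stack (V2 a b) (V2 c d)) (V2 e f) = M42 (a*e) (a*f) (b*e) (b*f) (c*e) (c*f) (d*e) (d*f)"
  by (simp add: outer_def M42_def stack_def vec_eq_iff forall_2 forall_4)

lemma M22_add[simp]: "M22 a b c d + M22 a' b' c' d' = M22 (a+a') (b+b') (c+c') (d+d')"
  by (simp add: M22_def vec_eq_iff forall_2)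
lemma M22_diff[simp]: "M22 a b c d - M22 a' b' c' d' = M22 (a-a') (b-b') (c-c') (d-d')"
  by (simp add: M22_def vec_eq_iff forall_2)
lemma M22_zero: "(0::real^2^2) = M22 0 0 0 0" by (simp add: M22_def vec_eq_iff forall_2)
lemma M22_eq[simp]: "M22 a b c d = M22 a' b' c' d' \<longleftrightarrow> a = a' \<and> b = b' \<and> c = c' \<and> d = d'"
  by (auto simp: M22_def vec_eq_iff forall_2)

lemma M42_add[simp]: "M42 a b c d e f g h + M42 a' b' c' d' e' f' g' h' = M42 (a+a') (b+b') (c+c') (d+d') (e+e') (f+f') (g+g') (h+h')"
  by (simp add: M42_def vec_eq_iff forall_2 forall_4)
lemma M42_scale[simp]: "r *\<^sub>R M42 a b c d e f g h = M42 (r*a) (r*b) (r*c) (r*d) (r*e) (r*f) (r*g) (r*h)"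
  by (simp add: M42_def vec_eq_iff forall_2 forall_4)
lemma M42_zero: "(0::real^2^4) = M42 0 0 0 0 0 0 0 0" by (simp add: M42_def vec_eq_iff forall_2 forall_4)

lemma upper_M42[simp]: "upper (M42 a b c d e f g h) = M22 a b c d"
  by (simp add: upper_def M42_def M22_def vec_eq_iff forall_2)
lemma lower_M42[simp]: "lower (M42 a b c d e f g h) = M22 e f g h"
  by (simp add: lower_def M42_def M22_def vec_eq_iff forall_2)
lemma det_M22[simp]: "det (M22 a b c d) = a * d - b * c"
  by (simp add: det_2 M22_def)
lemma M22_J[simp]: "M22 a b c d ** Jmat = M22 b (-a) d (-c)"
  by (simp add: matrix_matrix_mult_def Jmat_def M22_def vec_eq_iff forall_2 sum_2)
lemma frob_M22[simp]: "frob (M22 a b c d) (M22 a' b' c' d') = a*a' + b*b' + c*c' + d*d'"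
  by (simp add: frob_def M22_def sum_2)


lemma M42_eq[simp]: "M42 a b c d e f g h = M42 a' b' c' d' e' f' g' h' \<longleftrightarrow>
   a = a' \<and> b = b' \<and> c = c' \<and> d = d' \<and> e = e' \<and> f = f' \<and> g = g' \<and> h = h'"
proof
  assume H: "M42 a b c d e f g h = M42 a' b' c' d' e' f' g' h'"
  have "\<And>i k. M42 a b c d e f g h $ i $ k = M42 a' b' c' d' e' f' g' h' $ i $ k" using H by simp
  from this[of 1 1] this[of 1 2] this[of 2 1] this[of 2 2] this[of 3 1] this[of 3 2] this[of 4 1] this[of 4 2]
  show "a = a' \<and> b = b' \<and> c = c' \<and> d = d' \<and> e = e' \<and> f = f' \<and> g = g' \<and> h = h'"
    by (simp_all add: M42_def)
qed simp

lemma stack_ne: "a \<noteq> 0 \<or> b \<noteq> 0 \<Longrightarrow> stack (V2 a b) w \<noteq> 0"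
proof
  assume "a \<noteq> 0 \<or> b \<noteq> 0" "stack (V2 a b) w = 0"
  then have "stack (V2 a b) w $ 1 = 0" "stack (V2 a b) w $ 2 = 0" by simp_all
  then show False using \<open>a \<noteq> 0 \<or> b \<noteq> 0\<close> by (simp add: stack_def)
qed

lemma V2_ne: "a \<noteq> 0 \<or> b \<noteq> 0 \<Longrightarrow> V2 a b \<noteq> 0"
  by (simp add: V2_zero)

lemma ivl: "{1..<1::nat} = {}" "{1..<2::nat} = {1}" "{1..<3::nat} = {1,2}" "{1..<4::nat} = {1,2,3}"
  "{1..<5::nat} = {1,2,3,4}" "{1..5::nat} = {1,2,3,4,5}" by auto


lemma rank_outer:
  fixes u :: "real^'m" and v :: "real^'n"
  assumes "u \<noteq> 0" "v \<noteq> 0"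
  shows "rank (outer u v) = 1"
proof -
  have ne: "outer u v \<noteq> 0"
  proof
    assume h: "outer u v = 0"
    obtain i where i: "u $ i \<noteq> 0" using assms(1) by (metis vec_eq_iff zero_index)
    obtain k where k: "v $ k \<noteq> 0" using assms(2) by (metis vec_eq_iff zero_index)
    have "outer u v $ i $ k = 0" using h by simp
    then show False using i k by (simp add: outer_def)
  qed
  have mv: "outer u v *v x = (v \<bullet> x) *\<^sub>R u" for x
    by (simp add: outer_def vec_eq_iff matrix_vector_mult_def inner_vec_def sum_distrib_left mult.commute mult.left_commute)
  have "range (\<lambda>x. outer u v *v x) \<subseteq> span {u}"
    by (auto simp: mv span_singleton)
  then have "dim (range (\<lambda>x. outer u v *v x)) \<le> dim (span {u})"
    by (rule dim_subset)
  also have "\<dots> \<le> 1" by (simp add: dim_span dim_singleton)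
  finally have "rank (outer u v) \<le> 1" by (simp add: rank_dim_range)
  moreover have "rank (outer u v) \<noteq> 0" using ne by (simp add: rank_eq_0)
  ultimately show ?thesis by linarith
qed


theorem proposition2p1:
  shows "\<exists>(X::nat \<Rightarrow> real^2^4) (c::nat \<Rightarrow> real) (d::nat \<Rightarrow> real).
     M'_config 5 X \<and>
     (\<forall>i\<in>{1..5}. \<forall>j\<in>{1..5}. i \<noteq> j \<longrightarrow>
        c i - c j + d i * det (upper (X i) - upper (X j))
          + frob (upper (X i) - upper (X j)) (lower (X i) ** Jmat) < 0)"
proof -
  define al :: "nat \<Rightarrow> real^2" where "al j = (if j = 1 then V2 (- (1)) (- (1)) else if j = 2 then V2 (0) (1) else if j = 3 then V2 (7) (4) else if j = 4 then V2 (- (1)) (5) else V2 (- (2)) (1))" for j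
  define pp :: "nat \<Rightarrow> real^2" where "pp j = (if j = 1 then V2 (73 / 5) (- (74 / 5)) else if j = 2 then V2 (57 / 5) (- (108 / 5)) else if j = 3 then V2 (7 / 5) (- (4 / 5)) else if j = 4 then V2 (0) (6 / 5) else V2 (- (12 / 5)) (4))" for j
  define qq :: "nat \<Rightarrow> real^2" where "qq j = (if j = 1 then V2 (199 / 5) (- (117 / 5)) else if j = 2 then V2 (- (1422 / 35)) (2106 / 35) else if j = 3 then V2 (- (38 / 35)) (18 / 35) else if j = 4 then V2 (3 / 5) (- (9 / 5)) else V2 (16 / 5) (0))" for j
  define ka :: "nat \<Rightarrow> real" where "ka j = (if j = 1 then (8 / 5) else if j = 2 then (7 / 5) else if j = 3 then (16 / 5) else if j = 4 then (6 / 5) else (17 / 5))" for j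
  define cc :: "nat \<Rightarrow> real" where "cc j = (if j = 1 then (0) else if j = 2 then (1216) else if j = 3 then (1577) else if j = 4 then (321) else (158))" for j
  define dd :: "nat \<Rightarrow> real" where "dd j = (if j = 1 then (8) else if j = 2 then (- (10)) else if j = 3 then (9) else if j = 4 then (6) else (- (3)))" for j
  define dl :: "real^2" where "dl = V2 0 1"
  define C :: "nat \<Rightarrow> real^2^4" where "C j = outer (stack (pp j) ((al j \<bullet> dl) *\<^sub>R qq j)) (al j)" for j
  define X :: "nat \<Rightarrow> real^2^4" where "X j = 0 + (\<Sum>i=1..<j. C i) + ka j *\<^sub>R C j" for j
  have C1: "C 1 = M42 (- (73 / 5)) (- (73 / 5)) (74 / 5) (74 / 5) (199 / 5) (199 / 5) (- (117 / 5)) (- (117 / 5))" unfolding C_def al_def pp_def qq_def dl_def by (simp add: outer_stack)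
  have C2: "C 2 = M42 (0) (57 / 5) (0) (- (108 / 5)) (0) (- (1422 / 35)) (0) (2106 / 35)" unfolding C_def al_def pp_def qq_def dl_def by (simp add: outer_stack)
  have C3: "C 3 = M42 (49 / 5) (28 / 5) (- (28 / 5)) (- (16 / 5)) (- (152 / 5)) (- (608 / 35)) (72 / 5) (288 / 35)" unfolding C_def al_def pp_def qq_def dl_def by (simp add: outer_stack)
  have C4: "C 4 = M42 (0) (0) (- (6 / 5)) (6) (- (3)) (15) (9) (- (45))" unfolding C_def al_def pp_def qq_def dl_def by (simp add: outer_stack)
  have C5: "C 5 = M42 (24 / 5) (- (12 / 5)) (- (8)) (4) (- (32 / 5)) (16 / 5) (0) (0)" unfolding C_def al_def pp_def qq_def dl_def by (simp add: outer_stack)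
  have X1: "X 1 = M42 (- (584 / 25)) (- (584 / 25)) (592 / 25) (592 / 25) (1592 / 25) (1592 / 25) (- (936 / 25)) (- (936 / 25))" unfolding X_def ivl by (simp add: C1 C1[unfolded One_nat_def] C2 C3 C4 C5 ka_def)
  have X2: "X 2 = M42 (- (73 / 5)) (34 / 25) (74 / 5) (- (386 / 25)) (199 / 5) (- (427 / 25)) (- (117 / 5)) (1521 / 25)" unfolding X_def ivl by (simp add: C1 C1[unfolded One_nat_def] C2 C3 C4 C5 ka_def)
  have X3: "X 3 = M42 (419 / 25) (368 / 25) (- (78 / 25)) (- (426 / 25)) (- (1437 / 25)) (- (9873 / 175)) (567 / 25) (11043 / 175)" unfolding X_def ivl by (simp add: C1 C1[unfolded One_nat_def] C2 C3 C4 C5 ka_def)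
  have X4: "X 4 = M42 (- (24 / 5)) (12 / 5) (194 / 25) (- (14 / 5)) (29 / 5) (- (1 / 5)) (9 / 5) (- (9))" unfolding X_def ivl by (simp add: C1 C1[unfolded One_nat_def] C2 C3 C4 C5 ka_def)
  have X5: "X 5 = M42 (288 / 25) (- (144 / 25)) (- (96 / 5)) (48 / 5) (- (384 / 25)) (192 / 25) (0) (0)" unfolding X_def ivl by (simp add: C1 C1[unfolded One_nat_def] C2 C3 C4 C5 ka_def)

  have ineq: "\<forall>i\<in>{1..5}. \<forall>j\<in>{1..5}. i \<noteq> j \<longrightarrow>
        cc i - cc j + dd i * det (upper (X i) - upper (X j))
          + frob (upper (X i) - upper (X j)) (lower (X i) ** Jmat) < 0"
    unfolding ivl by (simp add: X1 X1[unfolded One_nat_def] X2 X3 X4 X5 cc_def dd_def)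
  have rk: "\<forall>j\<in>{1..5}. rank (C j) = 1 \<and> ka j > 1"
    unfolding ivl C_def by (simp add: rank_outer stack_ne V2_ne al_def pp_def qq_def ka_def)
  have sC0: "(\<Sum>j=1..5. C j) = M42 0 0 0 0 0 0 0 0"
    unfolding ivl by (simp add: C1 C1[unfolded One_nat_def] C2 C3 C4 C5)
  have sC: "(\<Sum>j=1..5. C j) = 0"
    by (simp only: sC0 M42_zero)
  have sp: "(\<Sum>j=1..5. outer (pp j) (al j)) = 0"
    unfolding ivl by (simp add: pp_def al_def outer_V2 M22_zero[symmetric])
  have sq: "\<forall>a b c::2. (\<Sum>j=1..5. qq j $ a * al j $ b * al j $ c) = 0"
    unfolding ivl forall_2 by (simp add: qq_def al_def)
  have ncol: "\<not> collinear_vec (al 1) (al 2) \<and> \<not> collinear_vec (al 1) (al 3) \<and> \<not> collinear_vec (al 2) (al 3)"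
    by (simp add: collinear_vec_def al_def)
  have al0: "\<forall>j\<in>{1..5}. al j \<noteq> 0"
    unfolding ivl by (simp add: al_def V2_ne)
  have ex3: "\<exists>j1\<in>{1..5::nat}. \<exists>j2\<in>{1..5::nat}. \<exists>j3\<in>{1..5::nat}.
            \<not> collinear_vec (al j1) (al j2) \<and> \<not> collinear_vec (al j1) (al j3) \<and>
            \<not> collinear_vec (al j2) (al j3)"
    using ncol unfolding ivl by blast
  have Xe: "\<forall>j\<in>{1..5}. X j = 0 + (\<Sum>i=1..<j. C i) + ka j *\<^sub>R C j" by (simp add: X_def)
  have Ce: "\<forall>j\<in>{1..5}. C j = outer (stack (pp j) ((al j \<bullet> dl) *\<^sub>R qq j)) (al j)" by (simp add: C_def)
  have "M'_config 5 X"
    unfolding M'_config_def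
    apply (rule conjI, simp)
    apply (rule exI[of _ 0], rule exI[of _ C], rule exI[of _ ka], rule exI[of _ pp], rule exI[of _ qq],
           rule exI[of _ al], rule exI[of _ dl])
    using rk sC Xe Ce al0 ex3 sp sq by blast
  then show ?thesis using ineq by blast
qed

end
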